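(* Let $X$ be a set, $m\colon X\times X\to X$ a binary operation and $i\colon X\to X$ an involution ($i\circ i=1_X$) such that $i(m(x,y))=m(i(y),i(x))$ for all $x,y\in X$. Define $\theta,\varphi\colon X\times X\to X\times X$ by $\theta(x,y)=(i(x),m(x,y))$ and $\varphi(x,y)=(m(x,y),i(y))$. Then $(\theta,\varphi,m)$ is an involutive-2-link (in the category of sets) if and only if for all $x,y\in X$: $$m(i(x),m(x,y))=y\quad\text{and}\quad m(m(x,y),i(y))=x.$$
   Context: Involutive-2-link in a category: a triple $(\theta,\varphi,m)$ where $m\colon A\to B$ is a morphism and $\theta,\varphi\colon A\to A$ satisfy $\theta^2=\varphi^2=1_A$ and $\theta\varphi\theta=\varphi\theta\varphi$, and such that the three parallel morphisms $m,m\theta,m\varphi\colon A\to B$ are jointly monomorphic (in sets: the map $a\mapsto (m(a),m\theta(a),m\varphi(a))$ is injective). *)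

theory Defs
  imports Main
begin

text \<open>Sets are modelled as types (A = UNIV of type 'a).\<close>

definition involutive_2_link :: "('a \<Rightarrow> 'a) \<Rightarrow> ('a \<Rightarrow> 'a) \<Rightarrow> ('a \<Rightarrow> 'b) \<Rightarrow> bool" where
  "involutive_2_link \<theta> \<phi> m \<longleftrightarrow>
     \<theta> \<circ> \<theta> = id \<and> \<phi> \<circ> \<phi> = id \<and>
     \<theta> \<circ> \<phi> \<circ> \<theta> = \<phi> \<circ> \<theta> \<circ> \<phi> \<and>
     inj (\<lambda>a. (m a, m (\<theta> a), m (\<phi> a)))"

end

theory Submission
  imports Defs
begin

theorem mainTheorem2:
  fixes m :: "'x \<Rightarrow> 'x \<Rightarrow> 'x" and i :: "'x \<Rightarrow> 'x"
  assumes inv: "i \<circ> i = id"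
    and anti: "\<And>x y. i (m x y) = m (i y) (i x)"
  shows "involutive_2_link (\<lambda>(x, y). (i x, m x y)) (\<lambda>(x, y). (m x y, i y)) (\<lambda>(x, y). m x y)
     \<longleftrightarrow> (\<forall>x y. m (i x) (m x y) = y \<and> m (m x y) (i y) = x)"
proof
  have ii: "\<And>x. i (i x) = x" using inv by (metis comp_apply id_apply)
  {
    assume L: "involutive_2_link (\<lambda>(x, y). (i x, m x y)) (\<lambda>(x, y). (m x y, i y)) (\<lambda>(x, y). m x y)"
    show "\<forall>x y. m (i x) (m x y) = y \<and> m (m x y) (i y) = x"
    proof (intro allI conjI)
      fix x y
      have "((\<lambda>(x, y). (i x, m x y)) \<circ> (\<lambda>(x, y). (i x, m x y))) (x,y) = id (x,y)"
        using L unfolding involutive_2_link_def by metis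
      thus "m (i x) (m x y) = y" by simp
      have "((\<lambda>(x, y). (m x y, i y)) \<circ> (\<lambda>(x, y). (m x y, i y))) (x,y) = id (x,y)"
        using L unfolding involutive_2_link_def by metis
      thus "m (m x y) (i y) = x" by simp
    qed
  }
  {
    assume R: "\<forall>x y. m (i x) (m x y) = y \<and> m (m x y) (i y) = x"
    have A: "\<And>x y. m (i x) (m x y) = y" and B: "\<And>x y. m (m x y) (i y) = x" using R by auto
    have b1: "m y (i (m x y)) = i x" for x y
      using A[of "i y" "i x"] by (simp add: anti ii)
    have b2: "m (i (m x y)) x = i y" for x y
      using B[of "i y" "i x"] by (simp add: anti ii)
    show "involutive_2_link (\<lambda>(x, y). (i x, m x y)) (\<lambda>(x, y). (m x y, i y)) (\<lambda>(x, y). m x y)"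
      unfolding involutive_2_link_def
    proof (intro conjI)
      show "(\<lambda>(x, y). (i x, m x y)) \<circ> (\<lambda>(x, y). (i x, m x y)) = id"
        by (rule ext) (auto simp: A ii)
      show "(\<lambda>(x, y). (m x y, i y)) \<circ> (\<lambda>(x, y). (m x y, i y)) = id"
        by (rule ext) (auto simp: B ii)
      show "(\<lambda>(x, y). (i x, m x y)) \<circ> (\<lambda>(x, y). (m x y, i y)) \<circ> (\<lambda>(x, y). (i x, m x y)) =
            (\<lambda>(x, y). (m x y, i y)) \<circ> (\<lambda>(x, y). (i x, m x y)) \<circ> (\<lambda>(x, y). (m x y, i y))"
        by (rule ext) (auto simp: A B b1 b2)
      show "inj (\<lambda>a. ((\<lambda>(x, y). m x y) a, (\<lambda>(x, y). m x y) ((\<lambda>(x, y). (i x, m x y)) a),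
                (\<lambda>(x, y). m x y) ((\<lambda>(x, y). (m x y, i y)) a)))"
      proof (rule injI)
        fix a b :: "'x \<times> 'x"
        assume h: "(\<lambda>a. ((\<lambda>(x, y). m x y) a, (\<lambda>(x, y). m x y) ((\<lambda>(x, y). (i x, m x y)) a),
                (\<lambda>(x, y). m x y) ((\<lambda>(x, y). (m x y, i y)) a))) a =
              (\<lambda>a. ((\<lambda>(x, y). m x y) a, (\<lambda>(x, y). m x y) ((\<lambda>(x, y). (i x, m x y)) a),
                (\<lambda>(x, y). m x y) ((\<lambda>(x, y). (m x y, i y)) a))) b"
        obtain a1 a2 b1 b2 where ab: "a = (a1,a2)" "b = (b1,b2)" by fastforce
        from h have "m (i a1) (m a1 a2) = m (i b1) (m b1 b2)" "m (m a1 a2) (i a2) = m (m b1 b2) (i b2)"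
          using h unfolding ab by (simp_all only: prod.case prod.inject)
        thus "a = b" by (simp add: A B ab)
      qed
    qed
  }
qed

end
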